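(* Let $M=M_n\to\infty$ as $n\to\infty$. Assume that (i) the combining function is of the form $\psi(p_1,\dots,p_r)=\sum_{j=1}^r w_j\varphi(p_j)$ with weights $w_j>0$, where $\varphi$ is decreasing, non-negative and one-to-one from $(0,1)$ to $(0,\infty)$; (ii) there exists $j_0\in\{1,\dots,r\}$ such that the null hypothesis $H_0^{(j_0)}$ does not hold and $\Pr(T_{n,j_0}^{[1]}\ge T_{n,j_0})\to0$; (iii) for every $j\in\{1,\dots,r\}$, the bootstrap replicates $T_{n,j}^{[1]},\dots,T_{n,j}^{[M_n]}$ contain no ties. Then $p_{n,M_n}(W_{n,M_n}^{[0]})\to0$ in probability.
   Context: Setting: Let $\mathbf{X}_n$ denote the available data. For $j\in\{1,\dots,r\}$, let $T_{n,j}=T_{n,j}(\mathbf{X}_n)$ be real-valued test statistics, large values of $T_{n,j}$ providing evidence against a null hypothesis $H_0^{(j)}$; let $\mathbf{T}_n=(T_{n,1},\dots,T_{n,r})$. Let $\mathbf{V}_n^{[1]},\mathbf{V}_n^{[2]},\dots$ be i.i.d. random vectors representing the additional randomness of a resampling mechanism (independent of the data) and let $\mathbf{T}_n^{[i]}=(T_{n,1}^{[i]},\dots,T_{n,r}^{[i]})=\mathbf{T}_n^{[i]}(\mathbf{X}_n,\mathbf{V}_n^{[i]})$, $i\ge1$, be bootstrap replicates of $\mathbf{T}_n$; set $\mathbf{T}_n^{[0]}=\mathbf{T}_n$. For an integer $M$, $i\in\{0,\dots,M\}$, $j\in\{1,\dots,r\}$, $$p_{n,M}(T_{n,j}^{[i]})=\frac{1}{M+1}\Big\{\frac12+\sum_{k=1}^M\mathbf{1}(T_{n,j}^{[k]}\ge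 T_{n,j}^{[i]})\Big\},\qquad W_{n,M}^{[i]}=\psi\{p_{n,M}(T_{n,1}^{[i]}),\dots,p_{n,M}(T_{n,r}^{[i]})\},$$ and $p_{n,M}(W_{n,M}^{[0]})=\frac1M\sum_{k=1}^M\mathbf{1}(W_{n,M}^{[k]}\ge W_{n,M}^{[0]})$. *)

theory Defs
  imports "HOL-Probability.Probability"
begin

text \<open>Bootstrap p-value of the i-th entry of a sequence t (t 0 = original statistic,
  t 1, ..., t m = bootstrap replicates):
  p_{n,M}(t^[i]) = (1/(M+1)) (1/2 + #{k in 1..M. t k >= t i}).\<close>
definition boot_pval :: "nat \<Rightarrow> (nat \<Rightarrow> real) \<Rightarrow> nat \<Rightarrow> real" where
  "boot_pval m t i = (1 / (real m + 1)) * (1 / 2 + real (card {k \<in> {1..m}. t k \<ge> t i}))"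

definition comb_stat :: "((nat \<Rightarrow> real) \<Rightarrow> real) \<Rightarrow> nat \<Rightarrow> (nat \<Rightarrow> nat \<Rightarrow> real) \<Rightarrow> nat \<Rightarrow> real" where
  "comb_stat psi m T i = psi (\<lambda>j. boot_pval m (\<lambda>k. T k j) i)"

definition comb_pval :: "nat \<Rightarrow> (nat \<Rightarrow> real) \<Rightarrow> real" where
  "comb_pval m W = (1 / real m) * real (card {k \<in> {1..m}. W k \<ge> W 0})"

definition tendsto_in_prob :: "'a measure \<Rightarrow> (nat \<Rightarrow> 'a \<Rightarrow> real) \<Rightarrow> real \<Rightarrow> bool" where
  "tendsto_in_prob P Y c \<longleftrightarrow>
     (\<forall>e>0. (\<lambda>n. measure P {\<omega> \<in> space P. \<bar>Y n \<omega> - c\<bar> > e}) \<longlonglongrightarrow> 0)"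

end

theory Submission imports Defs begin

lemma boot_pval_pos: "boot_pval m t i > 0"
  unfolding boot_pval_def by (simp add: field_simps add_pos_nonneg)

lemma boot_pval_lt1: "boot_pval m t i < 1"
proof -
  have "card {k \<in> {1..m}. t k \<ge> t i} \<le> card {1..m}" by (rule card_mono) auto
  hence "real (card {k \<in> {1..m}. t k \<ge> t i}) \<le> real m" by simp
  thus ?thesis unfolding boot_pval_def by (simp add: field_simps)
qed

lemma count_small:
  assumes "c \<ge> 0"
  shows "real (card {k \<in> {1..m}. boot_pval m t k < c}) \<le> (real m + 1) * c"
proof (cases "{k \<in> {1..m}. boot_pval m t k < c} = {}")
  case True thus ?thesis using assms by (subst True) simp
next
  case False
  define S where "S = {k \<in> {1..m}. boot_pval m t k < c}"
  have fin: "finite S" unfolding S_def by simp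
  have ne: "S \<noteq> {}" using False S_def by simp
  obtain ks where ks: "ks \<in> S" "t ks = Min (t ` S)"
  proof -
    have "Min (t ` S) \<in> t ` S" using fin ne by (intro Min_in) auto
    thus ?thesis using that by (metis imageE)
  qed
  have minle: "\<And>k. k \<in> S \<Longrightarrow> t ks \<le> t k" using ks fin by simp
  have "S \<subseteq> {k \<in> {1..m}. t k \<ge> t ks}" using minle S_def by auto
  hence "card S \<le> card {k \<in> {1..m}. t k \<ge> t ks}" by (intro card_mono) auto
  moreover have "boot_pval m t ks < c" using ks S_def by simp
  hence "(1/2 + real (card {k \<in> {1..m}. t k \<ge> t ks})) < c * (real m + 1)"
    unfolding boot_pval_def by (simp add: field_simps)
  ultimately show ?thesis unfolding S_def[symmetric] by (simp add: algebra_simps)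
qed

lemma det_bound:
  fixes T :: "nat \<Rightarrow> nat \<Rightarrow> real" and \<phi> :: "real \<Rightarrow> real" and w :: "nat \<Rightarrow> real"
  assumes m: "m \<ge> 1" and e': "e' \<in> {0<..<1}"
    and w_pos: "\<And>j. j \<in> {1..r} \<Longrightarrow> w j > 0"
    and \<phi>_decr: "\<And>x y. x \<in> {0<..<1} \<Longrightarrow> y \<in> {0<..<1} \<Longrightarrow> x \<le> y \<Longrightarrow> \<phi> y \<le> \<phi> x"
    and \<phi>_nonneg: "\<And>x. x \<in> {0<..<1} \<Longrightarrow> \<phi> x \<ge> 0"
    and j0: "j0 \<in> {1..r}"
    and key: "w j0 * \<phi> (boot_pval m (\<lambda>k. T k j0) 0) > \<phi> e' * (\<Sum>j=1..r. w j)"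
  shows "comb_pval m (comb_stat (\<lambda>p. \<Sum>j = 1..r. w j * \<phi> (p j)) m T) \<le> real r * (real m + 1) * e' / real m"
proof -
  define W where "W = comb_stat (\<lambda>p. \<Sum>j = 1..r. w j * \<phi> (p j)) m T"
  define S where "S j = {k \<in> {1..m}. boot_pval m (\<lambda>k. T k j) k < e'}" for j
  have pv: "boot_pval m t i \<in> {0<..<1}" for t i using boot_pval_pos boot_pval_lt1 by auto
  have W0: "W 0 \<ge> w j0 * \<phi> (boot_pval m (\<lambda>k. T k j0) 0)"
    unfolding W_def comb_stat_def
    by (rule member_le_sum[where f="\<lambda>j. w j * \<phi> (boot_pval m (\<lambda>k. T k j) 0)"])
       (use j0 w_pos \<phi>_nonneg pv in \<open>auto intro!: mult_nonneg_nonneg simp: less_imp_le\<close>)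
  have sub: "{k \<in> {1..m}. W k \<ge> W 0} \<subseteq> (\<Union>j\<in>{1..r}. S j)"
  proof
    fix k assume k: "k \<in> {k \<in> {1..m}. W k \<ge> W 0}"
    show "k \<in> (\<Union>j\<in>{1..r}. S j)"
    proof (rule ccontr)
      assume "k \<notin> (\<Union>j\<in>{1..r}. S j)"
      hence ge: "\<And>j. j \<in> {1..r} \<Longrightarrow> boot_pval m (\<lambda>k. T k j) k \<ge> e'" using k S_def by (auto simp: not_less)
      have "W k \<le> (\<Sum>j=1..r. w j * \<phi> e')"
        unfolding W_def comb_stat_def
        by (rule sum_mono) (use ge w_pos \<phi>_decr pv e' in \<open>auto intro!: mult_left_mono less_imp_le\<close>)
      also have "\<dots> = \<phi> e' * (\<Sum>j=1..r. w j)" by (simp add: sum_distrib_left mult.commute)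
      finally show False using k W0 key by auto
    qed
  qed
  have "card {k \<in> {1..m}. W k \<ge> W 0} \<le> card (\<Union>j\<in>{1..r}. S j)"
    by (rule card_mono[OF _ sub]) (auto simp: S_def)
  also have "\<dots> \<le> (\<Sum>j\<in>{1..r}. card (S j))" by (rule card_UN_le) simp
  finally have "real (card {k \<in> {1..m}. W k \<ge> W 0}) \<le> (\<Sum>j\<in>{1..r}. real (card (S j)))"
    by (metis of_nat_le_iff of_nat_sum)
  also have "\<dots> \<le> (\<Sum>j\<in>{1..r}. (real m + 1) * e')"
    by (rule sum_mono) (use count_small e' in \<open>auto simp: S_def\<close>)
  also have "\<dots> = real r * (real m + 1) * e'" by simp
  finally have c: "real (card {k \<in> {1..m}. W k \<ge> W 0}) \<le> real r * (real m + 1) * e'" .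
  show ?thesis unfolding W_def[symmetric] comb_pval_def using m c
    by (simp add: divide_right_mono)
qed


lemma ident_prob:
  fixes P :: "'a measure" and SX :: "'x measure" and SV :: "'v measure"
    and X :: "'a \<Rightarrow> 'x" and V :: "nat \<Rightarrow> 'a \<Rightarrow> 'v"
    and Ts :: "'x \<Rightarrow> real" and Tb :: "'x \<Rightarrow> 'v \<Rightarrow> real"
  assumes prob: "prob_space P"
    and X_meas: "X \<in> measurable P SX"
    and V_meas: "\<And>i. i \<ge> 1 \<Longrightarrow> V i \<in> measurable P SV"
    and V_ident: "\<And>i. i \<ge> 1 \<Longrightarrow> distr P SV (V i) = distr P SV (V 1)"
    and XV_indep: "distr P (SX \<Otimes>\<^sub>M PiM {1..} (\<lambda>_. SV))
                        (\<lambda>\<omega>. (X \<omega>, restrict (\<lambda>i. V i \<omega>) {1..}))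
                      = distr P SX X \<Otimes>\<^sub>M
                        distr P (PiM {1..} (\<lambda>_. SV)) (\<lambda>\<omega>. restrict (\<lambda>i. V i \<omega>) {1..})"
    and T_meas: "Ts \<in> borel_measurable SX"
    and Tb_meas: "(\<lambda>(x, v). Tb x v) \<in> borel_measurable (SX \<Otimes>\<^sub>M SV)"
    and k: "k \<ge> 1"
  shows "measure P {\<omega> \<in> space P. Tb (X \<omega>) (V k \<omega>) \<ge> Ts (X \<omega>)}
       = measure P {\<omega> \<in> space P. Tb (X \<omega>) (V 1 \<omega>) \<ge> Ts (X \<omega>)}"
proof -
  define PV where "PV = PiM {1::nat..} (\<lambda>_. SV)"
  define RV where "RV = (\<lambda>\<omega>. restrict (\<lambda>i. V i \<omega>) {1::nat..})"
  define Z where "Z = (\<lambda>\<omega>. (X \<omega>, RV \<omega>))"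
  define DX where "DX = distr P SX X"
  define DR where "DR = distr P PV RV"
  have RV_meas: "RV \<in> measurable P PV"
    unfolding RV_def PV_def by (rule measurable_restrict) (use V_meas in auto)
  have Z_meas: "Z \<in> measurable P (SX \<Otimes>\<^sub>M PV)"
    unfolding Z_def using X_meas RV_meas by (rule measurable_Pair)
  have XVi: "distr P (SX \<Otimes>\<^sub>M PV) Z = DX \<Otimes>\<^sub>M DR"
    using XV_indep unfolding Z_def DX_def DR_def PV_def RV_def by simp
  interpret DR: prob_space DR unfolding DR_def
    by (rule prob_space.prob_space_distr[OF prob RV_meas])
  have Tbx: "(\<lambda>v. Tb x v) \<in> borel_measurable SV" if "x \<in> space SX" for x
    using measurable_Pair2[OF Tb_meas that] by simp
  define G where "G i x = emeasure (distr P SV (V i)) {v \<in> space SV. Tb x v \<ge> Ts x}" for i x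
  have main: "emeasure P {\<omega> \<in> space P. Tb (X \<omega>) (V i \<omega>) \<ge> Ts (X \<omega>)} = (\<integral>\<^sup>+x. G i x \<partial>DX)"
    if i: "i \<ge> 1" for i
  proof -
    define S where "S = {z \<in> space (SX \<Otimes>\<^sub>M PV). Tb (fst z) (snd z i) \<ge> Ts (fst z)}"
    have comp: "(\<lambda>z. snd z i) \<in> measurable (SX \<Otimes>\<^sub>M PV) SV"
      unfolding PV_def
      by (rule measurable_compose[OF measurable_snd measurable_component_singleton]) (use i in auto)
    have f1: "(\<lambda>z. Tb (fst z) (snd z i)) \<in> borel_measurable (SX \<Otimes>\<^sub>M PV)"
      using measurable_compose[OF measurable_Pair[OF measurable_fst comp] Tb_meas] by simp
    have f2: "(\<lambda>z. Ts (fst z)) \<in> borel_measurable (SX \<Otimes>\<^sub>M PV)"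
      using measurable_compose[OF measurable_fst T_meas, of PV] by simp
    have S_sets: "S \<in> sets (SX \<Otimes>\<^sub>M PV)" unfolding S_def
      using f1 f2 by measurable
    have "{\<omega> \<in> space P. Tb (X \<omega>) (V i \<omega>) \<ge> Ts (X \<omega>)} = Z -` S \<inter> space P"
      using measurable_space[OF Z_meas] i unfolding S_def by (auto simp: Z_def RV_def)
    hence "emeasure P {\<omega> \<in> space P. Tb (X \<omega>) (V i \<omega>) \<ge> Ts (X \<omega>)}
        = emeasure (distr P (SX \<Otimes>\<^sub>M PV) Z) S"
      using emeasure_distr[OF Z_meas S_sets] by simp
    also have "\<dots> = emeasure (DX \<Otimes>\<^sub>M DR) S" using XVi by simp
    also have "\<dots> = (\<integral>\<^sup>+x. emeasure DR (Pair x -` S) \<partial>DX)"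
      by (rule DR.emeasure_pair_measure_alt) (use S_sets in \<open>simp add: DX_def DR_def\<close>)
    also have "\<dots> = (\<integral>\<^sup>+x. G i x \<partial>DX)"
    proof (rule nn_integral_cong)
      fix x assume "x \<in> space DX"
      hence x: "x \<in> space SX" by (simp add: DX_def)
      have A_sets: "{v \<in> space SV. Tb x v \<ge> Ts x} \<in> sets SV"
        using Tbx[OF x] by measurable
      have "Pair x -` S = {f \<in> space PV. Tb x (f i) \<ge> Ts x}"
        using x unfolding S_def by (auto simp: space_pair_measure)
      also have "\<dots> = (\<lambda>f. f i) -` {v \<in> space SV. Tb x v \<ge> Ts x} \<inter> space PV"
        using i unfolding PV_def by (auto simp: space_PiM PiE_def Pi_def)
      finally have "emeasure DR (Pair x -` S)
          = emeasure DR ((\<lambda>f. f i) -` {v \<in> space SV. Tb x v \<ge> Ts x} \<inter> space DR)"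
        by (simp add: DR_def)
      also have "\<dots> = emeasure (distr DR SV (\<lambda>f. f i)) {v \<in> space SV. Tb x v \<ge> Ts x}"
        by (rule emeasure_distr[symmetric])
           (use i A_sets in \<open>auto simp: DR_def PV_def intro!: measurable_component_singleton\<close>)
      also have "distr DR SV (\<lambda>f. f i) = distr P SV ((\<lambda>f. f i) \<circ> RV)"
        unfolding DR_def
        by (rule distr_distr) (use i RV_meas in \<open>auto simp: PV_def intro!: measurable_component_singleton\<close>)
      also have "(\<lambda>f. f i) \<circ> RV = V i" using i by (auto simp: RV_def)
      finally show "emeasure DR (Pair x -` S) = G i x" by (simp add: G_def)
    qed
    finally show ?thesis .
  qed
  have "G k = G 1" unfolding G_def using V_ident[OF k] by simp
  hence "emeasure P {\<omega> \<in> space P. Tb (X \<omega>) (V k \<omega>) \<ge> Ts (X \<omega>)}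
       = emeasure P {\<omega> \<in> space P. Tb (X \<omega>) (V 1 \<omega>) \<ge> Ts (X \<omega>)}"
    using main[OF k] main[of 1] by simp
  thus ?thesis by (simp add: measure_def)
qed


lemma measure_le_sets:
  assumes "finite_measure P" "A \<subseteq> B" "B \<in> sets P"
  shows "measure P A \<le> measure P B"
proof (cases "A \<in> sets P")
  case True thus ?thesis using assms finite_measure.finite_measure_mono by blast
next
  case False thus ?thesis by (simp add: measure_notin_sets)
qed

theorem proposition2:
  fixes P :: "'a measure"
    and SX :: "nat \<Rightarrow> 'x measure" and SV :: "nat \<Rightarrow> 'v measure"
    and X :: "nat \<Rightarrow> 'a \<Rightarrow> 'x" and V :: "nat \<Rightarrow> nat \<Rightarrow> 'a \<Rightarrow> 'v"
    and Tstat :: "nat \<Rightarrow> nat \<Rightarrow> 'x \<Rightarrow> real"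
    and Tboot :: "nat \<Rightarrow> nat \<Rightarrow> 'x \<Rightarrow> 'v \<Rightarrow> real"
    and r :: nat and Mn :: "nat \<Rightarrow> nat"
    and \<phi> :: "real \<Rightarrow> real" and w :: "nat \<Rightarrow> real"
    and H0 :: "nat \<Rightarrow> bool" and j0 :: nat
  assumes prob: "prob_space P"
    and r_pos: "r \<ge> 1"
    \<comment> \<open>data and resampling randomness\<close>
    and X_meas: "\<And>n. X n \<in> measurable P (SX n)"
    and V_meas: "\<And>n i. i \<ge> 1 \<Longrightarrow> V n i \<in> measurable P (SV n)"
    and V_indep: "\<And>n. prob_space.indep_vars P (\<lambda>_. SV n) (V n) {1..}"
    and V_ident: "\<And>n i. i \<ge> 1 \<Longrightarrow> distr P (SV n) (V n i) = distr P (SV n) (V n 1)"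
    and XV_indep: "\<And>n. distr P (SX n \<Otimes>\<^sub>M PiM {1..} (\<lambda>_. SV n))
                        (\<lambda>\<omega>. (X n \<omega>, restrict (\<lambda>i. V n i \<omega>) {1..}))
                      = distr P (SX n) (X n) \<Otimes>\<^sub>M
                        distr P (PiM {1..} (\<lambda>_. SV n)) (\<lambda>\<omega>. restrict (\<lambda>i. V n i \<omega>) {1..})"
    \<comment> \<open>test statistics T_{n,j} = T_{n,j}(X_n) and replicates T_{n,j}^[i] = T_{n,j}^[i](X_n, V_n^[i])\<close>
    and T_meas: "\<And>n j. Tstat n j \<in> borel_measurable (SX n)"
    and Tb_meas: "\<And>n j. (\<lambda>(x, v). Tboot n j x v) \<in> borel_measurable (SX n \<Otimes>\<^sub>M SV n)"
    \<comment> \<open>M = M_n tends to infinity\<close>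
    and Mn_lim: "filterlim Mn at_top sequentially"
    \<comment> \<open>(i) form of the combining function\<close>
    and w_pos: "\<And>j. j \<in> {1..r} \<Longrightarrow> w j > 0"
    and \<phi>_bij: "bij_betw \<phi> {0<..<1} {0<..}"
    and \<phi>_decr: "\<And>x y. x \<in> {0<..<1} \<Longrightarrow> y \<in> {0<..<1} \<Longrightarrow> x \<le> y \<Longrightarrow> \<phi> y \<le> \<phi> x"
    and \<phi>_nonneg: "\<And>x. x \<in> {0<..<1} \<Longrightarrow> \<phi> x \<ge> 0"
    \<comment> \<open>(ii) a false null hypothesis whose test is consistent\<close>
    and j0: "j0 \<in> {1..r}"
    and H0_false: "\<not> H0 j0"
    and consistent: "(\<lambda>n. measure P {\<omega> \<in> space P.
                        Tboot n j0 (X n \<omega>) (V n 1 \<omega>) \<ge> Tstat n j0 (X n \<omega>)}) \<longlonglongrightarrow> 0"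
    \<comment> \<open>(iii) no ties among the bootstrap replicates\<close>
    and no_ties: "\<And>n. AE \<omega> in P. \<forall>j\<in>{1..r}. \<forall>k\<in>{1..Mn n}. \<forall>k'\<in>{1..Mn n}.
                    k \<noteq> k' \<longrightarrow> Tboot n j (X n \<omega>) (V n k \<omega>) \<noteq> Tboot n j (X n \<omega>) (V n k' \<omega>)"
  shows "tendsto_in_prob P
           (\<lambda>n \<omega>. comb_pval (Mn n)
              (comb_stat (\<lambda>p. \<Sum>j = 1..r. w j * \<phi> (p j)) (Mn n)
                 (\<lambda>i j. if i = 0 then Tstat n j (X n \<omega>) else Tboot n j (X n \<omega>) (V n i \<omega>))))
           0"
  unfolding tendsto_in_prob_def
proof (intro allI impI)
  fix e :: real assume e: "e > 0"
  interpret P: prob_space P by (rule prob)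
  define Y where "Y n \<omega> = comb_pval (Mn n)
              (comb_stat (\<lambda>p. \<Sum>j = 1..r. w j * \<phi> (p j)) (Mn n)
                 (\<lambda>i j. if i = 0 then Tstat n j (X n \<omega>) else Tboot n j (X n \<omega>) (V n i \<omega>)))" for n \<omega>
  define E where "E n k = {\<omega> \<in> space P. Tboot n j0 (X n \<omega>) (V n k \<omega>) \<ge> Tstat n j0 (X n \<omega>)}" for n k
  define q where "q n = measure P (E n 1)" for n
  define e' where "e' = min (1/2) (e / (4 * real r))"
  have rr: "real r \<ge> 1" using r_pos by simp
  have e'01: "e' \<in> {0<..<1}" using e rr by (auto simp: e'_def)
  have e'le: "2 * real r * e' \<le> e / 2"
  proof -
    have "e' \<le> e / (4 * real r)" by (simp add: e'_def)
    hence "4 * real r * e' \<le> e" using rr by (simp add: le_divide_eq mult.commute)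
    thus ?thesis by simp
  qed
  define sw where "sw = (\<Sum>j=1..r. w j)"
  define B where "B = \<phi> e' * sw / w j0"
  have wj0: "w j0 > 0" using w_pos j0 by simp
  have "B + 1 \<in> {0<..}"
  proof -
    have "sw \<ge> 0" unfolding sw_def using w_pos by (auto intro!: sum_nonneg simp: less_imp_le)
    hence "B \<ge> 0" unfolding B_def using \<phi>_nonneg[OF e'01] wj0 by simp
    thus ?thesis by simp
  qed
  then obtain \<eta> where \<eta>: "\<eta> \<in> {0<..<1}" "\<phi> \<eta> = B + 1"
    using \<phi>_bij unfolding bij_betw_def by (metis imageE)
  have keyx: "w j0 * \<phi> x > \<phi> e' * sw" if "x \<in> {0<..<1}" "x \<le> \<eta>" for x
  proof -
    have "\<phi> x \<ge> B + 1" using \<phi>_decr[OF that(1) \<eta>(1) that(2)] \<eta>(2) by simp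
    hence "w j0 * \<phi> x \<ge> w j0 * (B + 1)" using wj0 by simp
    moreover have "w j0 * (B + 1) > w j0 * B" using wj0 by simp
    moreover have "w j0 * B = \<phi> e' * sw" using wj0 by (simp add: B_def)
    ultimately show ?thesis by linarith
  qed
  define N where "N = nat \<lceil>2 / \<eta>\<rceil> + 1"
  have evN: "eventually (\<lambda>n. Mn n \<ge> N) sequentially"
    using Mn_lim by (simp add: filterlim_at_top)
  have E_sets: "E n k \<in> sets P" if "k \<ge> 1" for n k
  proof -
    have "(\<lambda>\<omega>. Tboot n j0 (X n \<omega>) (V n k \<omega>)) \<in> borel_measurable P"
      using measurable_compose[OF measurable_Pair[OF X_meas V_meas[OF that]] Tb_meas[of n j0]] by simp
    moreover have "(\<lambda>\<omega>. Tstat n j0 (X n \<omega>)) \<in> borel_measurable P"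
      using measurable_compose[OF X_meas T_meas] by simp
    ultimately show ?thesis unfolding E_def by measurable
  qed
  have bound: "measure P {\<omega> \<in> space P. \<bar>Y n \<omega> - 0\<bar> > e} \<le> 2 * q n / \<eta>"
    if MN: "Mn n \<ge> N" for n
  proof -
    define M where "M = Mn n"
    have M1: "M \<ge> 1" using MN by (simp add: M_def N_def)
    have "real M \<ge> 2 / \<eta>" using MN unfolding M_def N_def by linarith
    hence \<eta>M: "\<eta> * real M \<ge> 2" using \<eta>(1) by (simp add: field_simps)
    define t where "t = \<eta> * real M / 2"
    have tpos: "t > 0" using \<eta>M by (simp add: t_def)
    define u where "u \<omega> = (\<Sum>k\<in>{1..M}. indicator (E n k) \<omega> :: real)" for \<omega>
    have u_card: "u \<omega> = real (card {k \<in> {1..M}. Tboot n j0 (X n \<omega>) (V n k \<omega>) \<ge> Tstat n j0 (X n \<omega>)})"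
      if "\<omega> \<in> space P" for \<omega>
    proof -
      have "real (card {k \<in> {1..M}. Tboot n j0 (X n \<omega>) (V n k \<omega>) \<ge> Tstat n j0 (X n \<omega>)})
          = (\<Sum>k\<in>{k \<in> {1..M}. Tboot n j0 (X n \<omega>) (V n k \<omega>) \<ge> Tstat n j0 (X n \<omega>)}. 1)"
        by simp
      also have "\<dots> = (\<Sum>k\<in>{1..M}. if Tboot n j0 (X n \<omega>) (V n k \<omega>) \<ge> Tstat n j0 (X n \<omega>) then 1 else 0)"
        by (rule sum.inter_filter) simp
      also have "\<dots> = u \<omega>" unfolding u_def E_def using that
        by (intro sum.cong) (auto simp: indicator_def)
      finally show ?thesis by simp
    qed
    have sub: "{\<omega> \<in> space P. \<bar>Y n \<omega> - 0\<bar> > e} \<subseteq> {\<omega> \<in> space P. u \<omega> \<ge> t}"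
    proof (rule subsetI, rule ccontr)
      fix \<omega> assume w1: "\<omega> \<in> {\<omega> \<in> space P. \<bar>Y n \<omega> - 0\<bar> > e}"
        and w2: "\<omega> \<notin> {\<omega> \<in> space P. u \<omega> \<ge> t}"
      define Tn where "Tn = (\<lambda>i j. if i = 0 then Tstat n j (X n \<omega>) else Tboot n j (X n \<omega>) (V n i \<omega>))"
      have om: "\<omega> \<in> space P" using w1 by simp
      have ut: "u \<omega> < t" using w2 om by simp
      have ceq: "{k \<in> {1..M}. Tn k j0 \<ge> Tn 0 j0} = {k \<in> {1..M}. Tboot n j0 (X n \<omega>) (V n k \<omega>) \<ge> Tstat n j0 (X n \<omega>)}"
        by (auto simp: Tn_def)
      define x where "x = boot_pval M (\<lambda>k. Tn k j0) 0"
      have xeq: "x = (1/2 + u \<omega>) / (real M + 1)"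
        unfolding x_def boot_pval_def using ceq u_card[OF om] by simp
      have "x \<le> \<eta>"
      proof -
        have "1/2 + u \<omega> \<le> 1/2 + t" using ut by simp
        also have "\<dots> \<le> \<eta> * (real M + 1)" unfolding t_def using \<eta>M \<eta>(1) by (simp add: algebra_simps)
        finally show ?thesis unfolding xeq by (simp add: divide_le_eq add_pos_pos)
      qed
      moreover have "x \<in> {0<..<1}" unfolding x_def using boot_pval_pos boot_pval_lt1 by auto
      ultimately have key: "w j0 * \<phi> (boot_pval M (\<lambda>k. Tn k j0) 0) > \<phi> e' * (\<Sum>j=1..r. w j)"
        using keyx unfolding x_def sw_def by blast
      have "Y n \<omega> \<le> real r * (real M + 1) * e' / real M"
        unfolding Y_def M_def[symmetric] Tn_def[symmetric]
        by (rule det_bound[where T=Tn and m=M and w=w and \<phi>=\<phi> and r=r and e'=e'])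
           (use M1 e'01 w_pos \<phi>_decr \<phi>_nonneg j0 key in auto)
      also have "\<dots> \<le> 2 * real r * e'"
      proof -
        have "(real M + 1) \<le> 2 * real M" using M1 by simp
        hence "real r * e' * (real M + 1) \<le> real r * e' * (2 * real M)"
          using e'01 by (intro mult_left_mono) auto
        thus ?thesis using M1 by (simp add: divide_le_eq algebra_simps)
      qed
      finally have "Y n \<omega> \<le> e / 2" using e'le by linarith
      moreover have "Y n \<omega> \<ge> 0" unfolding Y_def comb_pval_def by simp
      ultimately show False using w1 e by auto
    qed
    have u_meas: "u \<in> borel_measurable P" unfolding u_def
      using E_sets by (intro borel_measurable_sum borel_measurable_indicator) auto
    have B_sets: "{\<omega> \<in> space P. u \<omega> \<ge> t} \<in> sets P" using u_meas by measurable
    have int_u: "integrable P u" unfolding u_def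
    proof (rule Bochner_Integration.integrable_sum)
      fix k assume "k \<in> {1..M}"
      hence "E n k \<in> sets P" using E_sets by simp
      thus "integrable P (indicator (E n k) :: 'a \<Rightarrow> real)"
        by (intro integrable_real_indicator) (auto simp: less_top[symmetric])
    qed
    have "measure P {\<omega> \<in> space P. \<bar>Y n \<omega> - 0\<bar> > e} \<le> measure P {\<omega> \<in> space P. u \<omega> \<ge> t}"
      by (rule measure_le_sets[OF _ sub B_sets]) (simp add: P.finite_measure_axioms)
    also have "\<dots> \<le> (\<integral>\<omega>. u \<omega> \<partial>P) / t"
      by (rule integral_Markov_inequality_measure[OF int_u B_sets _ tpos])
         (auto simp: u_def intro!: sum_nonneg)
    also have "(\<integral>\<omega>. u \<omega> \<partial>P) = (\<Sum>k\<in>{1..M}. measure P (E n k))"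
    proof -
      have ii: "integrable P (indicator (E n k) :: 'a \<Rightarrow> real)" if "k \<in> {1..M}" for k
        using E_sets[of k n] that
        by (intro integrable_real_indicator) (auto simp: less_top[symmetric])
      have "(\<integral>\<omega>. (\<Sum>k\<in>{1..M}. indicator (E n k) \<omega> :: real) \<partial>P)
          = (\<Sum>k\<in>{1..M}. (\<integral>\<omega>. indicator (E n k) \<omega> \<partial>P))"
        by (rule Bochner_Integration.integral_sum) (use ii in auto)
      also have "\<dots> = (\<Sum>k\<in>{1..M}. measure P (E n k))"
        by (rule sum.cong) (use E_sets sets.sets_into_space in \<open>auto simp: Int_absorb2\<close>)
      finally show ?thesis by (simp add: u_def)
    qed
    also have "\<dots> = (\<Sum>k\<in>{1..M}. q n)"
    proof (rule sum.cong)
      fix k assume "k \<in> {1..M}"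
      thus "measure P (E n k) = q n" unfolding E_def q_def
        by (intro ident_prob[OF prob X_meas V_meas V_ident XV_indep T_meas Tb_meas]) auto
    qed simp
    also have "\<dots> = real M * q n" by simp
    finally have "measure P {\<omega> \<in> space P. \<bar>Y n \<omega> - 0\<bar> > e} \<le> real M * q n / t" by simp
    also have "real M * q n / t = 2 * q n / \<eta>"
      unfolding t_def using M1 \<eta>(1) by (simp add: field_simps)
    finally show ?thesis .
  qed
  have lim: "(\<lambda>n. 2 * q n / \<eta>) \<longlonglongrightarrow> 0"
  proof -
    have "(\<lambda>n. q n) \<longlonglongrightarrow> 0" using consistent by (simp add: q_def E_def)
    hence "(\<lambda>n. 2 * q n / \<eta>) \<longlonglongrightarrow> 2 * 0 / \<eta>" using \<eta>(1) by (intro tendsto_intros) auto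
    thus ?thesis by simp
  qed
  show "(\<lambda>n. measure P {\<omega> \<in> space P. \<bar>Y n \<omega> - 0\<bar> > e}) \<longlonglongrightarrow> 0"
    by (rule tendsto_sandwich[OF _ _ tendsto_const lim])
       (use evN bound in \<open>auto elim!: eventually_mono\<close>)
qed

end
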